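(* On the Heisenberg group $H=\langle a,b,c\mid ac=ca,\ bc=cb,\ [a,b]=c\rangle$ there exist length functions $l$ which are not stable norms, i.e. there is no function $L:H\to[0,\infty)$ with $L(gh)\leq L(g)+L(h)$ and $L(g)=L(g^{-1})$ for all $g,h$ such that $l(g)=\lim_{k\to\infty}L(g^{k})/k$ for all $g\in H$.
   Context: A length function on a group $G$ is a function $l:G\to[0,\infty)$ such that $l(g^{n})=|n|\,l(g)$ for all $g\in G,n\in\mathbb{Z}$; $l(hgh^{-1})=l(g)$ for all $g,h$; and $l(ab)\leq l(a)+l(b)$ whenever $a,b$ commute. *)

theory Defs
  imports "HOL-Algebra.Group" "HOL-Analysis.Analysis"
begin

text \<open>Here a = (1,0,0), b = (0,1,0),
  c = (0,0,1) satisfy ac = ca, bc = cb and the commutator of a and b is central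
  generating the centre; this is the standard model of the presented group.\<close>

definition heis_mult :: "int \<times> int \<times> int \<Rightarrow> int \<times> int \<times> int \<Rightarrow> int \<times> int \<times> int" where
  "heis_mult p q = (case p of (x,y,z) \<Rightarrow> case q of (x',y',z') \<Rightarrow> (x + x', y + y', z + z' + x * y'))"

definition heis :: "(int \<times> int \<times> int) monoid" where
  "heis = \<lparr>carrier = UNIV, monoid.mult = heis_mult, monoid.one = (0,0,0)\<rparr>"

definition length_function :: "('a, 'b) monoid_scheme \<Rightarrow> ('a \<Rightarrow> real) \<Rightarrow> bool" where
  "length_function G l \<longleftrightarrow>
     (\<forall>g\<in>carrier G. l g \<ge> 0) \<and>
     (\<forall>g\<in>carrier G. \<forall>n::int. l (g [^]\<^bsub>G\<^esub> n) = \<bar>real_of_int n\<bar> * l g) \<and>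
     (\<forall>g\<in>carrier G. \<forall>h\<in>carrier G. l (h \<otimes>\<^bsub>G\<^esub> g \<otimes>\<^bsub>G\<^esub> inv\<^bsub>G\<^esub> h) = l g) \<and>
     (\<forall>a\<in>carrier G. \<forall>b\<in>carrier G. a \<otimes>\<^bsub>G\<^esub> b = b \<otimes>\<^bsub>G\<^esub> a \<longrightarrow>
        l (a \<otimes>\<^bsub>G\<^esub> b) \<le> l a + l b)"

definition stable_norm :: "('a, 'b) monoid_scheme \<Rightarrow> ('a \<Rightarrow> real) \<Rightarrow> bool" where
  "stable_norm G l \<longleftrightarrow>
     (\<exists>L :: 'a \<Rightarrow> real.
        (\<forall>g\<in>carrier G. L g \<ge> 0) \<and>
        (\<forall>g\<in>carrier G. \<forall>h\<in>carrier G. L (g \<otimes>\<^bsub>G\<^esub> h) \<le> L g + L h) \<and>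
        (\<forall>g\<in>carrier G. L g = L (inv\<^bsub>G\<^esub> g)) \<and>
        (\<forall>g\<in>carrier G. (\<lambda>k::nat. L (g [^]\<^bsub>G\<^esub> k) / real k) \<longlonglongrightarrow> l g))"

end

theory Submission
  imports Defs
begin

lemma heis_mult_eq [simp]: "g \<otimes>\<^bsub>heis\<^esub> h = heis_mult g h"
  by (simp add: heis_def)

lemma heis_one [simp]: "\<one>\<^bsub>heis\<^esub> = (0,0,0)"
  by (simp add: heis_def)

lemma heis_carrier [simp]: "carrier heis = UNIV"
  by (simp add: heis_def)

lemma heis_mult_simp [simp]: "heis_mult (x,y,z) (x',y',z') = (x + x', y + y', z + z' + x * y')"
  by (simp add: heis_mult_def)

lemma heis_group: "group heis"
proof (rule groupI)
  fix x y z :: "int \<times> int \<times> int"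
  show "x \<otimes>\<^bsub>heis\<^esub> y \<otimes>\<^bsub>heis\<^esub> z = x \<otimes>\<^bsub>heis\<^esub> (y \<otimes>\<^bsub>heis\<^esub> z)"
    by (cases x; cases y; cases z) (auto simp: algebra_simps)
next
  fix x :: "int \<times> int \<times> int"
  show "\<one>\<^bsub>heis\<^esub> \<otimes>\<^bsub>heis\<^esub> x = x" by (cases x) auto
next
  fix x :: "int \<times> int \<times> int"
  assume "x \<in> carrier heis"
  obtain a b c where x: "x = (a,b,c)" by (cases x)
  show "\<exists>y\<in>carrier heis. y \<otimes>\<^bsub>heis\<^esub> x = \<one>\<^bsub>heis\<^esub>"
    by (rule bexI[of _ "(-a,-b,-c+a*b)"]) (auto simp: x)
qed auto

lemma heis_inv [simp]: "inv\<^bsub>heis\<^esub> (x,y,z) = (-x,-y,-z+x*y)"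
  by (rule group.inv_equality[OF heis_group]) auto

lemma heis_pow_fst: "fst (g [^]\<^bsub>heis\<^esub> (k::nat)) = int k * fst g \<and>
   fst (snd (g [^]\<^bsub>heis\<^esub> k)) = int k * fst (snd g)"
proof (induction k)
  case 0 then show ?case by simp
next
  case (Suc k)
  obtain x y z where g: "g = (x,y,z)" by (cases g)
  obtain p q r where p: "g [^]\<^bsub>heis\<^esub> k = (p,q,r)" by (cases "g [^]\<^bsub>heis\<^esub> k")
  show ?case using Suc p by (simp add: g algebra_simps)
qed

lemma heis_pow_int: "fst (g [^]\<^bsub>heis\<^esub> (n::int)) = n * fst g \<and>
   fst (snd (g [^]\<^bsub>heis\<^esub> n)) = n * fst (snd g)"
proof (cases "n < 0")
  case True
  obtain p q r where p: "g [^]\<^bsub>heis\<^esub> (nat (-n)) = (p,q,r)" by (cases "g [^]\<^bsub>heis\<^esub> (nat (-n))")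
  have "p = int (nat (-n)) * fst g" "q = int (nat (-n)) * fst (snd g)"
    using heis_pow_fst[of g "nat (-n)"] p by auto
  then have pq: "p = - n * fst g" "q = - n * fst (snd g)" using True by simp_all
  have "g [^]\<^bsub>heis\<^esub> n = inv\<^bsub>heis\<^esub> (g [^]\<^bsub>heis\<^esub> (nat (-n)))"
    using True by (simp only: int_pow_def2 if_True)
  also have "\<dots> = (-p,-q,-r+p*q)" by (simp only: p heis_inv)
  finally show ?thesis using pq by simp
next
  case False
  then have e: "g [^]\<^bsub>heis\<^esub> n = g [^]\<^bsub>heis\<^esub> (nat n)"
    by (simp only: int_pow_def2 if_False)
  have "int (nat n) = n" using False by simp
  then show ?thesis using heis_pow_fst[of g "nat n"] by (simp only: e)
qed

lemma pow_a: "(1::int,0::int,0::int) [^]\<^bsub>heis\<^esub> (k::nat) = (int k,0,0)"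
  by (induction k) auto

lemma pow_b: "(0::int,1::int,0::int) [^]\<^bsub>heis\<^esub> (k::nat) = (0,int k,0)"
  by (induction k) auto

lemma pow_ab: "(1::int,1::int,1::int) [^]\<^bsub>heis\<^esub> (k::nat) = (int k,int k, (int k * (int k + 1)) div 2)"
proof (induction k)
  case 0 then show ?case by simp
next
  case (Suc k)
  have "(int k * (int k + 1)) div 2 + 1 + int k = ((int k + 1) * (int k + 1 + 1)) div 2"
  proof -
    have "(int k + 1) * (int k + 1 + 1) = int k * (int k + 1) + 2 * (int k + 1)"
      by (simp add: algebra_simps)
    then show ?thesis by simp
  qed
  then show ?case using Suc by (simp add: add.commute)
qed

definition lf :: "int \<times> int \<times> int \<Rightarrow> real" where
  "lf g = (if fst g = fst (snd g) then \<bar>real_of_int (fst g)\<bar> else 0)"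

lemma lf_length: "length_function heis lf"
  unfolding length_function_def
proof (intro conjI ballI allI impI)
  fix g :: "int \<times> int \<times> int"
  show "0 \<le> lf g" by (simp add: lf_def)
next
  fix g :: "int \<times> int \<times> int" and n :: int
  show "lf (g [^]\<^bsub>heis\<^esub> n) = \<bar>real_of_int n\<bar> * lf g"
    using heis_pow_int[of g n] by (auto simp: lf_def abs_mult)
next
  fix g h :: "int \<times> int \<times> int"
  show "lf (h \<otimes>\<^bsub>heis\<^esub> g \<otimes>\<^bsub>heis\<^esub> inv\<^bsub>heis\<^esub> h) = lf g"
    by (cases g; cases h) (simp add: lf_def)
next
  fix a b :: "int \<times> int \<times> int"
  assume comm: "a \<otimes>\<^bsub>heis\<^esub> b = b \<otimes>\<^bsub>heis\<^esub> a"
  obtain x y z where a: "a = (x,y,z)" by (cases a)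
  obtain x' y' z' where b: "b = (x',y',z')" by (cases b)
  have c: "x * y' = x' * y" using comm by (simp add: a b)
  have key: "x + x' = 0" if "x \<noteq> y" "x + x' = y + y'"
  proof -
    have "y' = x + x' - y" using that(2) by simp
    then have "x*(x+x'-y) = x'*y" using c by simp
    then have "(x + x') * (x - y) = 0" by (simp add: algebra_simps)
    then show ?thesis using that(1) by simp
  qed
  show "lf (a \<otimes>\<^bsub>heis\<^esub> b) \<le> lf a + lf b"
    using key by (auto simp: a b lf_def)
qed

lemma not_stable: "\<not> stable_norm heis lf"
proof
  assume "stable_norm heis lf"
  then obtain L :: "int \<times> int \<times> int \<Rightarrow> real" where
    pos: "\<And>g. L g \<ge> 0" and sub: "\<And>g h. L (heis_mult g h) \<le> L g + L h"
    and sym: "\<And>g. L g = L (inv\<^bsub>heis\<^esub> g)"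
    and lim: "\<And>g. (\<lambda>k::nat. L (g [^]\<^bsub>heis\<^esub> k) / real k) \<longlonglongrightarrow> lf g"
    unfolding stable_norm_def heis_carrier heis_mult_eq by blast
  have la: "(\<lambda>k::nat. L (int k,0,0) / real k) \<longlonglongrightarrow> 0"
    using lim[of "(1,0,0)"] by (simp add: pow_a lf_def)
  have lb: "(\<lambda>k::nat. L (0,int k,0) / real k) \<longlonglongrightarrow> 0"
    using lim[of "(0,1,0)"] by (simp add: pow_b lf_def)
  have lab: "(\<lambda>k::nat. L (int k,int k,(int k * (int k + 1)) div 2) / real k) \<longlonglongrightarrow> 1"
    using lim[of "(1,1,1)"] by (simp add: pow_ab lf_def)
  have "eventually (\<lambda>k. L (int k,0,0) / real k < 1/20) sequentially"
    by (rule order_tendstoD(2)[OF la]) simp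
  then obtain N1 where N1: "\<And>k. k \<ge> N1 \<Longrightarrow> L (int k,0,0) / real k < 1/20"
    unfolding eventually_sequentially by blast
  have "eventually (\<lambda>k. L (0,int k,0) / real k < 1/20) sequentially"
    by (rule order_tendstoD(2)[OF lb]) simp
  then obtain N2 where N2: "\<And>k. k \<ge> N2 \<Longrightarrow> L (0,int k,0) / real k < 1/20"
    unfolding eventually_sequentially by blast
  have "eventually (\<lambda>k. L (int k,int k,(int k * (int k + 1)) div 2) / real k > 1/2) sequentially"
    by (rule order_tendstoD(1)[OF lab]) simp
  then obtain N3 where N3: "\<And>k. k \<ge> N3 \<Longrightarrow> L (int k,int k,(int k * (int k + 1)) div 2) / real k > 1/2"
    unfolding eventually_sequentially by blast
  define j where "j = N1 + N2 + N3 + 1"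
  have jpos: "j \<ge> 1" by (simp add: j_def)
  have A: "\<And>k. k \<ge> j \<Longrightarrow> L (int k,0,0) < real k / 20"
  proof -
    fix k assume "k \<ge> j"
    then have "k \<ge> N1" "k > 0" by (auto simp: j_def)
    with N1[of k] show "L (int k,0,0) < real k / 20" by (simp add: divide_simps)
  qed
  have B: "\<And>k. k \<ge> j \<Longrightarrow> L (0,int k,0) < real k / 20"
  proof -
    fix k assume "k \<ge> j"
    then have "k \<ge> N2" "k > 0" by (auto simp: j_def)
    with N2[of k] show "L (0,int k,0) < real k / 20" by (simp add: divide_simps)
  qed
  have D: "L (int (2*j),int (2*j),(int (2*j) * (int (2*j) + 1)) div 2) > real (2*j) / 2"
  proof -
    have "2*j \<ge> N3" "2*j > 0" by (auto simp: j_def)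
    with N3[of "2*j"] show ?thesis by (simp add: divide_simps)
  qed
  define J where "J = int j"
  have eq: "(int (2*j),int (2*j),(int (2*j) * (int (2*j) + 1)) div 2) =
     heis_mult (heis_mult (heis_mult (heis_mult (2*J,0,0) (0,4*J-1,0)) (J,0,0)) (0,-(2*J-1),0)) (-J,0,0)"
  proof -
    have "(2*J) * (2*J+1) = 2 * (J * (2*J+1))" by (simp add: algebra_simps)
    then have "((2*J) * (2*J+1)) div 2 = J * (2*J+1)" by simp
    then show ?thesis by (simp add: J_def algebra_simps)
  qed
  have i1: "L (0,-(2*J-1),0) = L (0, int (2*j-1), 0)"
  proof -
    have "inv\<^bsub>heis\<^esub> (0, int (2*j-1), 0) = (0,-(2*J-1),0)" using jpos by (simp add: J_def of_nat_diff)
    then show ?thesis using sym[of "(0, int (2*j-1), 0)"] by simp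
  qed
  have i2: "L (-J,0,0) = L (int j, 0, 0)"
  proof -
    have "inv\<^bsub>heis\<^esub> (int j, 0, 0) = (-J,0,0)" by (simp add: J_def)
    then show ?thesis using sym[of "(int j, 0, 0)"] by simp
  qed
  have e1: "L (2*J,0,0) = L (int (2*j),0,0)" by (simp add: J_def)
  have e2: "L (0,4*J-1,0) = L (0,int (4*j-1),0)" using jpos by (simp add: J_def of_nat_diff)
  have "L (int (2*j),int (2*j),(int (2*j) * (int (2*j) + 1)) div 2) \<le>
     L (2*J,0,0) + L (0,4*J-1,0) + L (J,0,0) + L (0,-(2*J-1),0) + L (-J,0,0)"
    unfolding eq
    using sub[of "heis_mult (heis_mult (heis_mult (2*J,0,0) (0,4*J-1,0)) (J,0,0)) (0,-(2*J-1),0)" "(-J,0,0)"]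
      sub[of "heis_mult (heis_mult (2*J,0,0) (0,4*J-1,0)) (J,0,0)" "(0,-(2*J-1),0)"]
      sub[of "heis_mult (2*J,0,0) (0,4*J-1,0)" "(J,0,0)"]
      sub[of "(2*J,0,0)" "(0,4*J-1,0)"] by linarith
  also have "\<dots> < real (2*j)/20 + real (4*j-1)/20 + real j/20 + real (2*j-1)/20 + real j/20"
  proof -
    have "L (int (2*j),0,0) < real (2*j)/20" using A[of "2*j"] by simp
    moreover have "L (0,int (4*j-1),0) < real (4*j-1)/20" using B[of "4*j-1"] by simp
    moreover have "L (int j,0,0) < real j/20" using A[of j] by simp
    moreover have "L (0,int (2*j-1),0) < real (2*j-1)/20" using B[of "2*j-1"] jpos by simp
    moreover have "L (J,0,0) = L (int j,0,0)" by (simp add: J_def)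
    ultimately show ?thesis using e1 e2 i1 i2 by linarith
  qed
  also have "\<dots> \<le> real (2*j) / 2" using jpos by (simp add: of_nat_diff field_simps)
  finally show False using D by simp
qed

theorem corollary25:
  shows "\<exists>l. length_function heis l \<and> \<not> stable_norm heis l"
  using lf_length not_stable by blast

end
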